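(* Let $\beta>0$ be a constant such that for every connected $P_7$-free graph $G'$ on at least two vertices, every potential maximal clique $\Omega'$ of $G'$ and every probability measure $\mu'$ on $\Omega'$, there is a vertex $v\in V(G')$ with $\mu'(N(v)\cap\Omega')\ge\beta$. Then for every $P_7$-free graph $G$, every potential maximal clique $\Omega$ of $G$, and every efficient dominating set $X$ of $G$, we have $|\Omega\cap X|\le 1/\beta$.
   Context: All graphs are finite, simple and undirected. $P_k$ is the path on $k$ vertices; a graph is $P_k$-free if it has no induced subgraph isomorphic to $P_k$. $N(v)$ is the open neighbourhood. A triangulation of $G$ is a set $F$ of non-edges such that $(V(G),E(G)\cup F)$ is chordal; it is minimal if no proper subset is a triangulation. A potential maximal clique of $G$ is a maximal clique of $(V(G),E(G)\cup F)$ for some minimal triangulation $F$. An efficient dominating set of $G$ is a set $X$ with $|N[v]\cap X|=1$ for every vertex $v$, where $N[v]$ is the closed neighbourhood. (A constant $\beta$ with the stated property exists.) *)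

theory Defs
  imports Complex_Main
begin

definition graph :: "'a set \<Rightarrow> ('a \<Rightarrow> 'a \<Rightarrow> bool) \<Rightarrow> bool" where
  "graph V E \<longleftrightarrow> finite V \<and> (\<forall>x y. E x y \<longrightarrow> x \<in> V \<and> y \<in> V)
     \<and> (\<forall>x y. E x y \<longrightarrow> E y x) \<and> (\<forall>x. \<not> E x x)"

definition nbhd :: "('a \<Rightarrow> 'a \<Rightarrow> bool) \<Rightarrow> 'a \<Rightarrow> 'a set" where
  "nbhd E v = {u. E v u}"

definition cnbhd :: "('a \<Rightarrow> 'a \<Rightarrow> bool) \<Rightarrow> 'a \<Rightarrow> 'a set" where
  "cnbhd E v = insert v (nbhd E v)"

definition connected_graph :: "'a set \<Rightarrow> ('a \<Rightarrow> 'a \<Rightarrow> bool) \<Rightarrow> bool" where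
  "connected_graph V E \<longleftrightarrow> V \<noteq> {} \<and> (\<forall>x\<in>V. \<forall>y\<in>V. E\<^sup>*\<^sup>* x y)"

definition has_induced_path :: "'a set \<Rightarrow> ('a \<Rightarrow> 'a \<Rightarrow> bool) \<Rightarrow> nat \<Rightarrow> bool" where
  "has_induced_path V E k \<longleftrightarrow> (\<exists>p :: nat \<Rightarrow> 'a. inj_on p {..<k} \<and> p ` {..<k} \<subseteq> V \<and>
     (\<forall>i<k. \<forall>j<k. E (p i) (p j) \<longleftrightarrow> (i = j + 1 \<or> j = i + 1)))"

definition P7_free :: "'a set \<Rightarrow> ('a \<Rightarrow> 'a \<Rightarrow> bool) \<Rightarrow> bool" where
  "P7_free V E \<longleftrightarrow> \<not> has_induced_path V E 7"

definition has_induced_cycle :: "'a set \<Rightarrow> ('a \<Rightarrow> 'a \<Rightarrow> bool) \<Rightarrow> nat \<Rightarrow> bool" where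
  "has_induced_cycle V E k \<longleftrightarrow> (\<exists>p :: nat \<Rightarrow> 'a. inj_on p {..<k} \<and> p ` {..<k} \<subseteq> V \<and>
     (\<forall>i<k. \<forall>j<k. E (p i) (p j) \<longleftrightarrow> (i = Suc j mod k \<or> j = Suc i mod k)))"

definition chordal :: "'a set \<Rightarrow> ('a \<Rightarrow> 'a \<Rightarrow> bool) \<Rightarrow> bool" where
  "chordal V E \<longleftrightarrow> (\<forall>k\<ge>4. \<not> has_induced_cycle V E k)"

definition non_edges :: "'a set \<Rightarrow> ('a \<Rightarrow> 'a \<Rightarrow> bool) \<Rightarrow> 'a set set" where
  "non_edges V E = {{u, v} | u v. u \<in> V \<and> v \<in> V \<and> u \<noteq> v \<and> \<not> E u v}"

definition add_edges :: "('a \<Rightarrow> 'a \<Rightarrow> bool) \<Rightarrow> 'a set set \<Rightarrow> 'a \<Rightarrow> 'a \<Rightarrow> bool" where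
  "add_edges E F x y \<longleftrightarrow> E x y \<or> {x, y} \<in> F"

definition triangulation :: "'a set \<Rightarrow> ('a \<Rightarrow> 'a \<Rightarrow> bool) \<Rightarrow> 'a set set \<Rightarrow> bool" where
  "triangulation V E F \<longleftrightarrow> F \<subseteq> non_edges V E \<and> chordal V (add_edges E F)"

definition minimal_triangulation :: "'a set \<Rightarrow> ('a \<Rightarrow> 'a \<Rightarrow> bool) \<Rightarrow> 'a set set \<Rightarrow> bool" where
  "minimal_triangulation V E F \<longleftrightarrow> triangulation V E F \<and>
     (\<forall>F'. F' \<subset> F \<longrightarrow> \<not> triangulation V E F')"

definition clique :: "'a set \<Rightarrow> ('a \<Rightarrow> 'a \<Rightarrow> bool) \<Rightarrow> 'a set \<Rightarrow> bool" where
  "clique V E K \<longleftrightarrow> K \<subseteq> V \<and> (\<forall>x\<in>K. \<forall>y\<in>K. x \<noteq> y \<longrightarrow> E x y)"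

definition maximal_clique :: "'a set \<Rightarrow> ('a \<Rightarrow> 'a \<Rightarrow> bool) \<Rightarrow> 'a set \<Rightarrow> bool" where
  "maximal_clique V E K \<longleftrightarrow> clique V E K \<and> (\<forall>K'. clique V E K' \<and> K \<subseteq> K' \<longrightarrow> K' = K)"

definition potential_maximal_clique :: "'a set \<Rightarrow> ('a \<Rightarrow> 'a \<Rightarrow> bool) \<Rightarrow> 'a set \<Rightarrow> bool" where
  "potential_maximal_clique V E \<Omega> \<longleftrightarrow>
     (\<exists>F. minimal_triangulation V E F \<and> maximal_clique V (add_edges E F) \<Omega>)"

definition efficient_dominating_set :: "'a set \<Rightarrow> ('a \<Rightarrow> 'a \<Rightarrow> bool) \<Rightarrow> 'a set \<Rightarrow> bool" where
  "efficient_dominating_set V E X \<longleftrightarrow> X \<subseteq> V \<and> (\<forall>v\<in>V. card (cnbhd E v \<inter> X) = 1)"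

end

theory Submission
  imports Defs
begin


lemma cycle_map:
  assumes "has_induced_cycle V' H' k" "inj_on g V'" "g ` V' \<subseteq> V"
    "\<forall>i\<in>V'. \<forall>j\<in>V'. H' i j \<longleftrightarrow> H (g i) (g j)"
  shows "has_induced_cycle V H k"
proof -
  obtain p where p: "inj_on p {..<k}" "p ` {..<k} \<subseteq> V'"
    "\<forall>i<k. \<forall>j<k. H' (p i) (p j) \<longleftrightarrow> (i = Suc j mod k \<or> j = Suc i mod k)"
    using assms(1) unfolding has_induced_cycle_def by blast
  have "inj_on (g \<circ> p) {..<k}"
    using p(1,2) assms(2) by (meson comp_inj_on inj_on_subset)
  moreover have "(g \<circ> p) ` {..<k} \<subseteq> V" using p(2) assms(3) by auto
  moreover have "\<forall>i<k. \<forall>j<k. H ((g\<circ>p) i) ((g\<circ>p) j) \<longleftrightarrow> (i = Suc j mod k \<or> j = Suc i mod k)"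
  proof (intro allI impI)
    fix i j assume ij: "i < k" "j < k"
    then have "p i \<in> V'" "p j \<in> V'" using p(2) by auto
    then have "H' (p i) (p j) \<longleftrightarrow> H (g (p i)) (g (p j))" using assms(4) by blast
    moreover have "H' (p i) (p j) \<longleftrightarrow> (i = Suc j mod k \<or> j = Suc i mod k)" using p(3) ij by blast
    ultimately show "H ((g\<circ>p) i) ((g\<circ>p) j) \<longleftrightarrow> (i = Suc j mod k \<or> j = Suc i mod k)" by simp
  qed
  ultimately show ?thesis unfolding has_induced_cycle_def by blast
qed

lemma path_map:
  assumes "has_induced_path V' H' k" "inj_on g V'" "g ` V' \<subseteq> V"
    "\<forall>i\<in>V'. \<forall>j\<in>V'. H' i j \<longleftrightarrow> H (g i) (g j)"
  shows "has_induced_path V H k"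
proof -
  obtain p where p: "inj_on p {..<k}" "p ` {..<k} \<subseteq> V'"
    "\<forall>i<k. \<forall>j<k. H' (p i) (p j) \<longleftrightarrow> (i = j + 1 \<or> j = i + 1)"
    using assms(1) unfolding has_induced_path_def by blast
  have "inj_on (g \<circ> p) {..<k}"
    using p(1,2) assms(2) by (meson comp_inj_on inj_on_subset)
  moreover have "(g \<circ> p) ` {..<k} \<subseteq> V" using p(2) assms(3) by auto
  moreover have "\<forall>i<k. \<forall>j<k. H ((g\<circ>p) i) ((g\<circ>p) j) \<longleftrightarrow> (i = j + 1 \<or> j = i + 1)"
  proof (intro allI impI)
    fix i j assume ij: "i < k" "j < k"
    then have "p i \<in> V'" "p j \<in> V'" using p(2) by auto
    then have "H' (p i) (p j) \<longleftrightarrow> H (g (p i)) (g (p j))" using assms(4) by blast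
    moreover have "H' (p i) (p j) \<longleftrightarrow> (i = j + 1 \<or> j = i + 1)" using p(3) ij by blast
    ultimately show "H ((g\<circ>p) i) ((g\<circ>p) j) \<longleftrightarrow> (i = j + 1 \<or> j = i + 1)" by simp
  qed
  ultimately show ?thesis unfolding has_induced_path_def by blast
qed

lemma cycle_split:
  assumes "has_induced_cycle V H k" "\<forall>x y. H x y \<longrightarrow> (x\<in>S \<longleftrightarrow> y\<in>S)"
  shows "has_induced_cycle (V \<inter> S) H k \<or> has_induced_cycle (V - S) H k"
proof -
  obtain p where p: "inj_on p {..<k}" "p ` {..<k} \<subseteq> V"
    "\<forall>i<k. \<forall>j<k. H (p i) (p j) \<longleftrightarrow> (i = Suc j mod k \<or> j = Suc i mod k)"
    using assms(1) unfolding has_induced_cycle_def by blast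
  have all: "\<forall>i<k. (p i \<in> S \<longleftrightarrow> p 0 \<in> S)"
  proof (intro allI impI)
    fix i assume "i < k" thus "p i \<in> S \<longleftrightarrow> p 0 \<in> S"
    proof (induction i)
      case 0 then show ?case by simp
    next
      case (Suc i)
      have "H (p i) (p (Suc i))" using p(3) Suc.prems by auto
      then show ?case using Suc assms(2) by auto
    qed
  qed
  show ?thesis
  proof (cases "p 0 \<in> S")
    case True
    then have "p ` {..<k} \<subseteq> V \<inter> S" using all p(2) by auto
    then show ?thesis using p unfolding has_induced_cycle_def by blast
  next
    case False
    then have "p ` {..<k} \<subseteq> V - S" using all p(2) by auto
    then show ?thesis using p unfolding has_induced_cycle_def by blast
  qed
qed

lemma split_tri:
  assumes closed: "\<forall>x y. E x y \<longrightarrow> (x\<in>C \<longleftrightarrow> y\<in>C)"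
   and F1: "\<forall>e\<in>F1. e \<subseteq> C" and F2: "\<forall>e\<in>F2. e \<inter> C = {}"
   and ch1: "\<forall>k\<ge>4. \<not> has_induced_cycle C (add_edges E F1) k"
   and ch2: "\<forall>k\<ge>4. \<not> has_induced_cycle (V - C) (add_edges E F2) k"
  shows "chordal V (add_edges E (F1 \<union> F2))"
  unfolding chordal_def
proof (intro allI impI notI)
  fix k :: nat assume k: "k \<ge> 4" and cyc: "has_induced_cycle V (add_edges E (F1 \<union> F2)) k"
  have cl: "\<forall>x y. add_edges E (F1 \<union> F2) x y \<longrightarrow> (x\<in>C \<longleftrightarrow> y\<in>C)"
  proof (intro allI impI)
    fix x y assume "add_edges E (F1 \<union> F2) x y"
    then consider "E x y" | "{x,y} \<in> F1" | "{x,y} \<in> F2" unfolding add_edges_def by blast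
    then show "x\<in>C \<longleftrightarrow> y\<in>C"
    proof cases
      case 1 then show ?thesis using closed by blast
    next
      case 2 then have "{x,y} \<subseteq> C" by (rule bspec[OF F1])
      then show ?thesis by simp
    next
      case 3 then have "{x,y} \<inter> C = {}" by (rule bspec[OF F2])
      then show ?thesis by simp
    qed
  qed
  from cycle_split[OF cyc cl] show False
  proof
    assume a: "has_induced_cycle (V \<inter> C) (add_edges E (F1 \<union> F2)) k"
    have "has_induced_cycle C (add_edges E F1) k"
    proof (rule cycle_map[OF a, of id])
      show "\<forall>i\<in>V \<inter> C. \<forall>j\<in>V \<inter> C. add_edges E (F1 \<union> F2) i j = add_edges E F1 (id i) (id j)"
      proof (intro ballI)
        fix i j assume "i \<in> V \<inter> C" "j \<in> V \<inter> C"
        then have "{i,j} \<notin> F2"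
        proof (intro notI)
          assume "{i,j} \<in> F2"
          then have "{i,j} \<inter> C = {}" by (rule bspec[OF F2])
          then show False using \<open>i \<in> V \<inter> C\<close> by auto
        qed
        then show "add_edges E (F1 \<union> F2) i j = add_edges E F1 (id i) (id j)"
          unfolding add_edges_def by simp
      qed
    qed auto
    then show False using ch1 k by blast
  next
    assume a: "has_induced_cycle (V - C) (add_edges E (F1 \<union> F2)) k"
    have "has_induced_cycle (V - C) (add_edges E F2) k"
    proof (rule cycle_map[OF a, of id])
      show "\<forall>i\<in>V - C. \<forall>j\<in>V - C. add_edges E (F1 \<union> F2) i j = add_edges E F2 (id i) (id j)"
      proof (intro ballI)
        fix i j assume "i \<in> V - C" "j \<in> V - C"
        then have "{i,j} \<notin> F1"
        proof (intro notI)
          assume "{i,j} \<in> F1"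
          then have "{i,j} \<subseteq> C" by (rule bspec[OF F1])
          then show False using \<open>i \<in> V - C\<close> by auto
        qed
        then show "add_edges E (F1 \<union> F2) i j = add_edges E F2 (id i) (id j)"
          unfolding add_edges_def by simp
      qed
    qed auto
    then show False using ch2 k by blast
  qed
qed

lemma cross:
  assumes mt: "minimal_triangulation V E F" and closed: "\<forall>x y. E x y \<longrightarrow> (x\<in>C \<longleftrightarrow> y\<in>C)"
    and CV: "C \<subseteq> V"
  shows "\<forall>e\<in>F. e \<subseteq> C \<or> e \<inter> C = {}"
proof -
  define F1 where "F1 = {e\<in>F. e \<subseteq> C}"
  define F2 where "F2 = {e\<in>F. e \<inter> C = {}}"
  have tri: "triangulation V E F" using mt unfolding minimal_triangulation_def by blast
  have ch: "chordal V (add_edges E F)" using tri unfolding triangulation_def by blast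
  have "chordal V (add_edges E (F1 \<union> F2))"
  proof (rule split_tri[OF closed])
    show "\<forall>e\<in>F1. e \<subseteq> C" "\<forall>e\<in>F2. e \<inter> C = {}" unfolding F1_def F2_def by auto
    show "\<forall>k\<ge>4. \<not> has_induced_cycle C (add_edges E F1) k"
    proof (intro allI impI notI)
      fix k :: nat assume k: "4 \<le> k" and a: "has_induced_cycle C (add_edges E F1) k"
      have "has_induced_cycle V (add_edges E F) k"
      proof (rule cycle_map[OF a, of id])
        show "\<forall>i\<in>C. \<forall>j\<in>C. add_edges E F1 i j = add_edges E F (id i) (id j)"
          unfolding add_edges_def F1_def by simp
      qed (use CV in auto)
      then show False using ch k unfolding chordal_def by blast
    qed
    show "\<forall>k\<ge>4. \<not> has_induced_cycle (V - C) (add_edges E F2) k"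
    proof (intro allI impI notI)
      fix k :: nat assume k: "4 \<le> k" and a: "has_induced_cycle (V - C) (add_edges E F2) k"
      have "has_induced_cycle V (add_edges E F) k"
      proof (rule cycle_map[OF a, of id])
        show "\<forall>i\<in>V - C. \<forall>j\<in>V - C. add_edges E F2 i j = add_edges E F (id i) (id j)"
          unfolding add_edges_def F2_def by simp
      qed auto
      then show False using ch k unfolding chordal_def by blast
    qed
  qed
  moreover have "F1 \<union> F2 \<subseteq> F" unfolding F1_def F2_def by auto
  moreover have "F \<subseteq> non_edges V E" using tri unfolding triangulation_def by simp
  ultimately have "triangulation V E (F1 \<union> F2)" unfolding triangulation_def by (meson order_trans)
  then have "\<not> (F1 \<union> F2 \<subset> F)" using mt unfolding minimal_triangulation_def by blast
  with \<open>F1 \<union> F2 \<subseteq> F\<close> have "F1 \<union> F2 = F" by blast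
  show ?thesis
  proof
    fix e assume "e \<in> F"
    then have "e \<in> F1 \<union> F2" using \<open>F1 \<union> F2 = F\<close> by simp
    then show "e \<subseteq> C \<or> e \<inter> C = {}" unfolding F1_def F2_def Un_iff mem_Collect_eq by (elim disjE conjE) (rule disjI1, assumption | rule disjI2, assumption)+
  qed
qed



lemma inj_card_le:
  assumes "inj_on p {..<k}" "p ` {..<k} \<subseteq> (S::'b set)" "finite S"
  shows "k \<le> card S"
proof -
  have "card (p ` {..<k}) = k" using assms(1) by (simp add: card_image)
  moreover have "card (p ` {..<k}) \<le> card S" using assms(2,3) card_mono by blast
  ultimately show ?thesis by simp
qed

lemma beta_le1:
  assumes beta_prop: "\<forall>(V' :: nat set) (E' :: nat \<Rightarrow> nat \<Rightarrow> bool) (\<Omega>' :: nat set) (\<mu> :: nat \<Rightarrow> real).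
        graph V' E' \<and> connected_graph V' E' \<and> card V' \<ge> 2 \<and> P7_free V' E' \<and>
        potential_maximal_clique V' E' \<Omega>' \<and> (\<forall>x\<in>\<Omega>'. \<mu> x \<ge> 0) \<and> (\<Sum>x\<in>\<Omega>'. \<mu> x) = 1
        \<longrightarrow> (\<exists>v\<in>V'. (\<Sum>x\<in>nbhd E' v \<inter> \<Omega>'. \<mu> x) \<ge> \<beta>)"
  shows "\<beta> \<le> 1"
proof -
  define V' :: "nat set" where "V' = {0,1}"
  define E' :: "nat \<Rightarrow> nat \<Rightarrow> bool" where "E' = (\<lambda>i j. (i = 0 \<and> j = 1) \<or> (i = 1 \<and> j = 0))"
  define \<mu> :: "nat \<Rightarrow> real" where "\<mu> = (\<lambda>i. if i = 0 then 1 else 0)"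
  have g: "graph V' E'" unfolding graph_def V'_def E'_def by auto
  have e01: "E' 0 1" "E' 1 0" unfolding E'_def by auto
  have c: "connected_graph V' E'" unfolding connected_graph_def V'_def
    using e01 by auto
  have card: "card V' \<ge> 2" unfolding V'_def by simp
  have p7: "P7_free V' E'" unfolding P7_free_def
  proof
    assume "has_induced_path V' E' 7"
    then obtain p where "inj_on p {..<(7::nat)}" "p ` {..<7} \<subseteq> V'" unfolding has_induced_path_def by blast
    then have "7 \<le> card V'" using inj_card_le unfolding V'_def by blast
    then show False unfolding V'_def by simp
  qed
  have ch: "chordal V' (add_edges E' {})" unfolding chordal_def
  proof (intro allI impI notI)
    fix k :: nat assume k: "4 \<le> k" and "has_induced_cycle V' (add_edges E' {}) k"
    then obtain p where "inj_on p {..<k}" "p ` {..<k} \<subseteq> V'" unfolding has_induced_cycle_def by blast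
    then have "k \<le> card V'" using inj_card_le unfolding V'_def by blast
    then show False using k unfolding V'_def by simp
  qed
  have pmc: "potential_maximal_clique V' E' V'"
    unfolding potential_maximal_clique_def
  proof (intro exI conjI)
    show "minimal_triangulation V' E' {}" unfolding minimal_triangulation_def triangulation_def
      using ch by auto
    show "maximal_clique V' (add_edges E' {}) V'"
      unfolding maximal_clique_def clique_def V'_def add_edges_def E'_def by auto
  qed
  have mu: "\<forall>x\<in>V'. \<mu> x \<ge> 0" "(\<Sum>x\<in>V'. \<mu> x) = 1" unfolding \<mu>_def V'_def by auto
  obtain v where "v \<in> V'" "(\<Sum>x\<in>nbhd E' v \<inter> V'. \<mu> x) \<ge> \<beta>"
    using beta_prop[rule_format, of V' E' V' \<mu>] g c card p7 pmc mu by blast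
  moreover have "(\<Sum>x\<in>nbhd E' v \<inter> V'. \<mu> x) \<le> (\<Sum>x\<in>V'. \<mu> x)"
    by (rule sum_mono2) (auto simp: V'_def \<mu>_def)
  ultimately show ?thesis using mu by linarith
qed



theorem lemma3:
  fixes \<beta> :: real and V :: "'a set" and E :: "'a \<Rightarrow> 'a \<Rightarrow> bool"
    and \<Omega> X :: "'a set"
  assumes beta_pos: "\<beta> > 0"
    and beta_prop: "\<forall>(V' :: nat set) (E' :: nat \<Rightarrow> nat \<Rightarrow> bool) (\<Omega>' :: nat set) (\<mu> :: nat \<Rightarrow> real).
        graph V' E' \<and> connected_graph V' E' \<and> card V' \<ge> 2 \<and> P7_free V' E' \<and>
        potential_maximal_clique V' E' \<Omega>' \<and> (\<forall>x\<in>\<Omega>'. \<mu> x \<ge> 0) \<and> (\<Sum>x\<in>\<Omega>'. \<mu> x) = 1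
        \<longrightarrow> (\<exists>v\<in>V'. (\<Sum>x\<in>nbhd E' v \<inter> \<Omega>'. \<mu> x) \<ge> \<beta>)"
    and "graph V E"
    and "P7_free V E"
    and "potential_maximal_clique V E \<Omega>"
    and "efficient_dominating_set V E X"
  shows "real (card (\<Omega> \<inter> X)) \<le> 1 / \<beta>"
proof -
  define m where "m = card (\<Omega> \<inter> X)"
  have b1: "\<beta> \<le> 1" using beta_le1[OF beta_prop] .
  show ?thesis
  proof (cases "m \<le> 1")
    case True
    then have "real m \<le> 1" by simp
    moreover have "1 \<le> 1/\<beta>" using beta_pos b1 by simp
    ultimately show ?thesis unfolding m_def by linarith
  next
    case False
    hence m2: "m \<ge> 2" by simp
    obtain F where mt: "minimal_triangulation V E F" and mc: "maximal_clique V (add_edges E F) \<Omega>"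
      using assms(5) unfolding potential_maximal_clique_def by blast
    have \<Omega>V: "\<Omega> \<subseteq> V" using mc unfolding maximal_clique_def clique_def by blast
    have finV: "finite V" using assms(3) unfolding graph_def by simp
    have EV: "\<And>x y. E x y \<Longrightarrow> x \<in> V \<and> y \<in> V" and Esym: "\<And>x y. E x y \<Longrightarrow> E y x"
      and Eirr: "\<And>x. \<not> E x x"
      using assms(3) unfolding graph_def by blast+
    have "\<Omega> \<inter> X \<noteq> {}" using m2 unfolding m_def by (metis card.empty not_numeral_le_zero)
    then obtain x0 where x0: "x0 \<in> \<Omega>" "x0 \<in> X" by blast
    define C where "C = {y. E\<^sup>*\<^sup>* x0 y}"
    have x0C: "x0 \<in> C" unfolding C_def by simp
    have CV: "C \<subseteq> V"
    proof
      fix y assume "y \<in> C"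
      then have "E\<^sup>*\<^sup>* x0 y" unfolding C_def by simp
      then show "y \<in> V"
        by (induction rule: rtranclp_induct) (use x0 \<Omega>V EV in auto)
    qed
    have closed: "\<forall>x y. E x y \<longrightarrow> (x\<in>C \<longleftrightarrow> y\<in>C)"
    proof (intro allI impI)
      fix x y assume e: "E x y"
      show "x\<in>C \<longleftrightarrow> y\<in>C"
      proof
        assume "x \<in> C" then show "y \<in> C" using e unfolding C_def
          by (simp add: rtranclp.rtrancl_into_rtrancl)
      next
        assume "y \<in> C" then show "x \<in> C" using Esym[OF e] unfolding C_def
          by (simp add: rtranclp.rtrancl_into_rtrancl)
      qed
    qed
    have cr: "\<forall>e\<in>F. e \<subseteq> C \<or> e \<inter> C = {}" using cross[OF mt closed CV] .
    have cliq: "\<And>x y. x \<in> \<Omega> \<Longrightarrow> y \<in> \<Omega> \<Longrightarrow> x \<noteq> y \<Longrightarrow> add_edges E F x y"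
      using mc unfolding maximal_clique_def clique_def by blast
    have \<Omega>C: "\<Omega> \<subseteq> C"
    proof
      fix y assume y: "y \<in> \<Omega>"
      show "y \<in> C"
      proof (cases "y = x0")
        case True then show ?thesis using x0C by simp
      next
        case False
        then have "add_edges E F x0 y" using cliq x0 y by simp
        then consider "E x0 y" | "{x0,y} \<in> F" unfolding add_edges_def by blast
        then show ?thesis
        proof cases
          case 1 then show ?thesis using closed x0C by blast
        next
          case 2
          then have "{x0,y} \<subseteq> C \<or> {x0,y} \<inter> C = {}" by (rule bspec[OF cr])
          then show ?thesis using x0C by auto
        qed
      qed
    qed
    have finC: "finite C" using CV finV finite_subset by blast
    define n where "n = card C"
    obtain g where bij: "bij_betw g {..<n} C"
      using ex_bij_betw_nat_finite[OF finC] unfolding n_def atLeast0LessThan by blast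
    have ginj: "inj_on g {..<n}" and gim: "g ` {..<n} = C" using bij unfolding bij_betw_def by auto
    have gC: "\<And>i. i < n \<Longrightarrow> g i \<in> C" using gim by auto
    define h where "h = the_inv_into {..<n} g"
    have hn: "\<And>x. x \<in> C \<Longrightarrow> h x < n" unfolding h_def
      using the_inv_into_into[OF ginj] gim by (metis lessThan_iff subset_refl)
    have gh: "\<And>x. x \<in> C \<Longrightarrow> g (h x) = x" unfolding h_def
      using f_the_inv_into_f[OF ginj] gim by metis
    have hg: "\<And>i. i < n \<Longrightarrow> h (g i) = i" unfolding h_def
      using the_inv_into_f_f[OF ginj] by simp
    have hinj: "inj_on h C" by (rule inj_onI) (metis gh)
    have mC: "m \<le> n" unfolding m_def n_def using \<Omega>C finC by (meson card_mono inf.coboundedI1)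
    define E' where "E' = (\<lambda>i j. i < n \<and> j < n \<and> E (g i) (g j))"
    define F' where "F' = {{i,j} | i j. i < n \<and> j < n \<and> {g i, g j} \<in> F}"
    define \<Omega>' where "\<Omega>' = {i. i < n \<and> g i \<in> \<Omega>}"
    define V' where "V' = {..<n}"
    have F'sub: "\<And>e. e \<in> F' \<Longrightarrow> e \<subseteq> {..<n}" unfolding F'_def by auto
    have gimg: "\<And>e. e \<in> F' \<Longrightarrow> g ` e \<in> F" unfolding F'_def by auto
    have memF': "\<And>i j. i < n \<Longrightarrow> j < n \<Longrightarrow> {i,j} \<in> F' \<longleftrightarrow> {g i, g j} \<in> F"
    proof
      fix i j assume "i < n" "j < n" and ijF: "{i,j} \<in> F'"
      have "g ` {i,j} \<in> F" by (rule gimg[OF ijF])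
      then show "{g i, g j} \<in> F" by simp
    next
      fix i j assume "i < n" "j < n" "{g i, g j} \<in> F"
      then show "{i,j} \<in> F'" unfolding F'_def by blast
    qed
    have AE: "\<And>i j. i < n \<Longrightarrow> j < n \<Longrightarrow> add_edges E' F' i j \<longleftrightarrow> add_edges E F (g i) (g j)"
      unfolding add_edges_def E'_def using memF' by simp
    have tri: "triangulation V E F" using mt unfolding minimal_triangulation_def by blast
    have chF: "chordal V (add_edges E F)" using tri unfolding triangulation_def by blast
    have Fne: "F \<subseteq> non_edges V E" using tri unfolding triangulation_def by blast
    have G': "graph V' E'" unfolding graph_def V'_def E'_def using Esym Eirr by auto
    have reach: "\<And>y. E\<^sup>*\<^sup>* x0 y \<Longrightarrow> E'\<^sup>*\<^sup>* (h x0) (h y)"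
    proof -
      fix y assume "E\<^sup>*\<^sup>* x0 y"
      then show "E'\<^sup>*\<^sup>* (h x0) (h y)"
      proof (induction rule: rtranclp_induct)
        case base then show ?case by simp
      next
        case (step y z)
        have yC: "y \<in> C" using step.hyps(1) unfolding C_def by simp
        have zC: "z \<in> C" using step.hyps(1,2) unfolding C_def
          by (simp add: rtranclp.rtrancl_into_rtrancl)
        have "E' (h y) (h z)" unfolding E'_def using hn[OF yC] hn[OF zC] gh[OF yC] gh[OF zC] step.hyps(2)
          by simp
        then show ?case using step.IH by (simp add: rtranclp.rtrancl_into_rtrancl)
      qed
    qed
    have E'sym: "\<And>i j. E' i j \<Longrightarrow> E' j i" unfolding E'_def using Esym by blast
    have rev: "\<And>a b. E'\<^sup>*\<^sup>* a b \<Longrightarrow> E'\<^sup>*\<^sup>* b a"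
    proof -
      fix a b assume "E'\<^sup>*\<^sup>* a b"
      then show "E'\<^sup>*\<^sup>* b a"
      proof (induction rule: rtranclp_induct)
        case base then show ?case by simp
      next
        case (step y z)
        then show ?case using E'sym converse_rtranclp_into_rtranclp by metis
      qed
    qed
    have r0: "\<And>i. i < n \<Longrightarrow> E'\<^sup>*\<^sup>* (h x0) i"
    proof -
      fix i assume i: "i < n"
      have "E\<^sup>*\<^sup>* x0 (g i)" using gC[OF i] unfolding C_def by simp
      then show "E'\<^sup>*\<^sup>* (h x0) i" using reach hg[OF i] by metis
    qed
    have n2: "n \<ge> 2" using m2 mC by simp
    have conn: "connected_graph V' E'" unfolding connected_graph_def V'_def
    proof
      have "0 \<in> {..<n}" using n2 by simp
      then show "{..<n} \<noteq> {}" by blast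
      show "\<forall>x\<in>{..<n}. \<forall>y\<in>{..<n}. E'\<^sup>*\<^sup>* x y"
        using r0 rev rtranclp_trans by (metis lessThan_iff)
    qed
    have cardV': "card V' \<ge> 2" unfolding V'_def using n2 by simp
    have p7: "P7_free V' E'" unfolding P7_free_def
    proof
      assume "has_induced_path V' E' 7"
      then have "has_induced_path V E 7"
        by (rule path_map[of _ _ _ g]) (use ginj gim CV in \<open>auto simp: V'_def E'_def\<close>)
      then show False using assms(4) unfolding P7_free_def by blast
    qed
    have trimap: "\<And>k. has_induced_cycle V' (add_edges E' F') k \<Longrightarrow> has_induced_cycle V (add_edges E F) k"
    proof -
      fix k assume a: "has_induced_cycle V' (add_edges E' F') k"
      show "has_induced_cycle V (add_edges E F) k"
        by (rule cycle_map[OF a, of g]) (use ginj gim CV AE in \<open>auto simp: V'_def\<close>)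
    qed
    have F'ne: "F' \<subseteq> non_edges V' E'"
    proof
      fix e assume "e \<in> F'"
      then obtain i j where e: "e = {i,j}" "i < n" "j < n" "{g i, g j} \<in> F" unfolding F'_def by blast
      then have "{g i, g j} \<in> non_edges V E" using Fne by blast
      then obtain u v where uv: "{g i, g j} = {u,v}" "u \<noteq> v" "\<not> E u v" unfolding non_edges_def by blast
      have "g i \<noteq> g j \<and> \<not> E (g i) (g j)"
        using uv Esym unfolding doubleton_eq_iff by metis
      then have "i \<noteq> j" "\<not> E' i j" unfolding E'_def by auto
      then show "e \<in> non_edges V' E'" unfolding non_edges_def V'_def using e by blast
    qed
    have chF': "chordal V' (add_edges E' F')" unfolding chordal_def using trimap chF
      unfolding chordal_def by blast
    have minF': "\<forall>F''. F'' \<subset> F' \<longrightarrow> \<not> triangulation V' E' F''"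
    proof (intro allI impI notI)
      fix F'' assume sub: "F'' \<subset> F'" and tr'': "triangulation V' E' F''"
      define F1 where "F1 = (\<lambda>e. g ` e) ` F''"
      define F2 where "F2 = {e\<in>F. e \<inter> C = {}}"
      have F''sub: "\<And>e. e \<in> F'' \<Longrightarrow> e \<subseteq> {..<n}" using sub F'sub by blast
      have F1F: "F1 \<subseteq> F" unfolding F1_def using sub gimg by blast
      have F1C: "\<forall>e\<in>F1. e \<subseteq> C" unfolding F1_def using F''sub gim by blast
      have F2C: "\<forall>e\<in>F2. e \<inter> C = {}" unfolding F2_def by blast
      obtain e0 where e0: "e0 \<in> F'" "e0 \<notin> F''" using sub by blast
      then obtain i j where ij: "e0 = {i,j}" "i < n" "j < n" unfolding F'_def by blast
      have ge0: "g ` e0 \<in> F" using gimg e0(1) .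
      have "g ` e0 \<notin> F2"
      proof
        assume "g ` e0 \<in> F2"
        then have "g ` e0 \<inter> C = {}" unfolding F2_def by simp
        moreover have "g i \<in> g ` e0 \<inter> C" using ij gC by simp
        ultimately show False by simp
      qed
      moreover have "g ` e0 \<notin> F1"
      proof
        assume "g ` e0 \<in> F1"
        then obtain e'' where "e'' \<in> F''" "g ` e0 = g ` e''" unfolding F1_def by blast
        then have "e0 = e''" using inj_on_image_eq_iff[OF ginj] F''sub F'sub e0(1) by metis
        then show False using e0 \<open>e'' \<in> F''\<close> by simp
      qed
      ultimately have "F1 \<union> F2 \<noteq> F" using ge0 by blast
      moreover have "F1 \<union> F2 \<subseteq> F" using F1F unfolding F2_def by blast
      ultimately have ssub: "F1 \<union> F2 \<subset> F" by blast
      have ch'': "chordal V' (add_edges E' F'')" using tr'' unfolding triangulation_def by blast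
      have "chordal V (add_edges E (F1 \<union> F2))"
      proof (rule split_tri[OF closed F1C F2C])
        show "\<forall>k\<ge>4. \<not> has_induced_cycle C (add_edges E F1) k"
        proof (intro allI impI notI)
          fix k :: nat assume k: "4 \<le> k" and a: "has_induced_cycle C (add_edges E F1) k"
          have "has_induced_cycle V' (add_edges E' F'') k"
          proof (rule cycle_map[OF a hinj])
            show "h ` C \<subseteq> V'" unfolding V'_def using hn by auto
            show "\<forall>x\<in>C. \<forall>y\<in>C. add_edges E F1 x y = add_edges E' F'' (h x) (h y)"
            proof (intro ballI)
              fix x y assume x: "x \<in> C" and y: "y \<in> C"
              have eq1: "E x y \<longleftrightarrow> E' (h x) (h y)" unfolding E'_def using hn gh x y by simp
              have eq2: "{x,y} \<in> F1 \<longleftrightarrow> {h x, h y} \<in> F''"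
              proof
                assume "{x,y} \<in> F1"
                then obtain e where e: "e \<in> F''" "g ` e = {x,y}" unfolding F1_def by blast
                have "g ` {h x, h y} = {x,y}" using gh x y by simp
                then have "g ` e = g ` {h x, h y}" using e by simp
                moreover have "{h x, h y} \<subseteq> {..<n}" using hn x y by simp
                ultimately have "e = {h x, h y}" using inj_on_image_eq_iff[OF ginj] F''sub[OF e(1)] by metis
                then show "{h x, h y} \<in> F''" using e by simp
              next
                assume "{h x, h y} \<in> F''"
                moreover have "g ` {h x, h y} = {x,y}" using gh x y by simp
                ultimately show "{x,y} \<in> F1" unfolding F1_def by (metis image_eqI)
              qed
              show "add_edges E F1 x y = add_edges E' F'' (h x) (h y)"
                unfolding add_edges_def using eq1 eq2 by simp
            qed
          qed
          then show False using ch'' k unfolding chordal_def by blast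
        qed
        show "\<forall>k\<ge>4. \<not> has_induced_cycle (V - C) (add_edges E F2) k"
        proof (intro allI impI notI)
          fix k :: nat assume k: "4 \<le> k" and a: "has_induced_cycle (V - C) (add_edges E F2) k"
          have "has_induced_cycle V (add_edges E F) k"
          proof (rule cycle_map[OF a, of id])
            show "\<forall>i\<in>V - C. \<forall>j\<in>V - C. add_edges E F2 i j = add_edges E F (id i) (id j)"
              unfolding add_edges_def F2_def by simp
          qed auto
          then show False using chF k unfolding chordal_def by blast
        qed
      qed
      moreover have "F1 \<union> F2 \<subseteq> non_edges V E" using \<open>F1 \<union> F2 \<subseteq> F\<close> Fne by (meson order_trans)
      ultimately have "triangulation V E (F1 \<union> F2)" unfolding triangulation_def by blast
      then show False using mt ssub unfolding minimal_triangulation_def by blast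
    qed
    have clq': "clique V' (add_edges E' F') \<Omega>'"
      unfolding clique_def
    proof
      show "\<Omega>' \<subseteq> V'" unfolding \<Omega>'_def V'_def by auto
      show "\<forall>x\<in>\<Omega>'. \<forall>y\<in>\<Omega>'. x \<noteq> y \<longrightarrow> add_edges E' F' x y"
      proof (intro ballI impI)
        fix i j assume i: "i \<in> \<Omega>'" and j: "j \<in> \<Omega>'" and ne: "i \<noteq> j"
        have "g i \<noteq> g j" using ne ginj i j unfolding \<Omega>'_def inj_on_def by auto
        then have "add_edges E F (g i) (g j)" using cliq i j unfolding \<Omega>'_def by simp
        then show "add_edges E' F' i j" using AE i j unfolding \<Omega>'_def by simp
      qed
    qed
    have mclq': "maximal_clique V' (add_edges E' F') \<Omega>'"
      unfolding maximal_clique_def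
    proof (intro conjI allI impI)
      show "clique V' (add_edges E' F') \<Omega>'" by (rule clq')
      fix K' assume a: "clique V' (add_edges E' F') K' \<and> \<Omega>' \<subseteq> K'"
      have K'n: "K' \<subseteq> {..<n}" using a unfolding clique_def V'_def by blast
      have "clique V (add_edges E F) (g ` K')" unfolding clique_def
      proof
        show "g ` K' \<subseteq> V" using K'n gim CV by blast
        show "\<forall>x\<in>g ` K'. \<forall>y\<in>g ` K'. x \<noteq> y \<longrightarrow> add_edges E F x y"
        proof (intro ballI impI)
          fix x y assume "x \<in> g ` K'" "y \<in> g ` K'" "x \<noteq> y"
          then obtain i j where "i \<in> K'" "j \<in> K'" "x = g i" "y = g j" "i \<noteq> j" by blast
          then have "add_edges E' F' i j" using a unfolding clique_def by blast
          then show "add_edges E F x y" using AE K'n \<open>i \<in> K'\<close> \<open>j \<in> K'\<close> \<open>x = g i\<close> \<open>y = g j\<close> by auto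
        qed
      qed
      moreover have "\<Omega> \<subseteq> g ` K'"
      proof
        fix x assume x: "x \<in> \<Omega>"
        then have xC: "x \<in> C" using \<Omega>C by blast
        have "h x \<in> \<Omega>'" unfolding \<Omega>'_def using hn[OF xC] gh[OF xC] x by simp
        then have "h x \<in> K'" using a by blast
        then show "x \<in> g ` K'" using gh[OF xC] by (metis image_eqI)
      qed
      ultimately have "g ` K' = \<Omega>" using mc unfolding maximal_clique_def by blast
      then have "K' \<subseteq> \<Omega>'" unfolding \<Omega>'_def using K'n by auto
      then show "K' = \<Omega>'" using a by blast
    qed
    have pmc': "potential_maximal_clique V' E' \<Omega>'"
      unfolding potential_maximal_clique_def minimal_triangulation_def triangulation_def
      using F'ne chF' minF' mclq' unfolding triangulation_def by blast
    define \<mu> :: "nat \<Rightarrow> real" where "\<mu> = (\<lambda>i. if g i \<in> X then 1 / real m else 0)"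
    have mu0: "\<forall>x\<in>\<Omega>'. \<mu> x \<ge> 0" unfolding \<mu>_def by simp
    have finO': "finite \<Omega>'" unfolding \<Omega>'_def by simp
    have sumS: "\<And>S. finite S \<Longrightarrow> (\<Sum>x\<in>S. \<mu> x) = real (card {x\<in>S. g x \<in> X}) / real m"
    proof -
      fix S :: "nat set" assume "finite S"
      have "(\<Sum>x\<in>{x\<in>S. g x \<in> X}. 1 / real m) = (\<Sum>x\<in>S. \<mu> x)"
        unfolding \<mu>_def by (rule sum.inter_filter[OF \<open>finite S\<close>])
      then have "(\<Sum>x\<in>S. \<mu> x) = (\<Sum>x\<in>{x\<in>S. g x \<in> X}. 1 / real m)" by simp
      then show "(\<Sum>x\<in>S. \<mu> x) = real (card {x\<in>S. g x \<in> X}) / real m" by simp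
    qed
    have "g ` {x\<in>\<Omega>'. g x \<in> X} = \<Omega> \<inter> X"
    proof
      show "g ` {x\<in>\<Omega>'. g x \<in> X} \<subseteq> \<Omega> \<inter> X" unfolding \<Omega>'_def by auto
      show "\<Omega> \<inter> X \<subseteq> g ` {x\<in>\<Omega>'. g x \<in> X}"
      proof
        fix x assume x: "x \<in> \<Omega> \<inter> X"
        then have xC: "x \<in> C" using \<Omega>C by blast
        have "h x \<in> {x\<in>\<Omega>'. g x \<in> X}" unfolding \<Omega>'_def using hn[OF xC] gh[OF xC] x by simp
        then show "x \<in> g ` {x\<in>\<Omega>'. g x \<in> X}" using gh[OF xC] by (metis image_eqI)
      qed
    qed
    moreover have "inj_on g {x\<in>\<Omega>'. g x \<in> X}" using ginj unfolding \<Omega>'_def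
      by (rule inj_on_subset) auto
    ultimately have "card {x\<in>\<Omega>'. g x \<in> X} = m" unfolding m_def by (metis card_image)
    then have mu1: "(\<Sum>x\<in>\<Omega>'. \<mu> x) = 1" using sumS[OF finO'] m2 by simp
    have "\<exists>v\<in>V'. (\<Sum>x\<in>nbhd E' v \<inter> \<Omega>'. \<mu> x) \<ge> \<beta>"
      apply (rule beta_prop[rule_format])
      apply (intro conjI)
      apply (rule G')
      apply (rule conn)
      apply (rule cardV')
      apply (rule p7)
      apply (rule pmc')
      apply (rule mu0)
      apply (rule mu1)
      done
    then obtain v where v: "v \<in> V'" "(\<Sum>x\<in>nbhd E' v \<inter> \<Omega>'. \<mu> x) \<ge> \<beta>" by blast
    have vn: "v < n" using v(1) unfolding V'_def by simp
    have gvV: "g v \<in> V" using gC[OF vn] CV by blast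
    have c1: "card (cnbhd E (g v) \<inter> X) = 1" using assms(6) gvV unfolding efficient_dominating_set_def by blast
    have finN: "finite (cnbhd E (g v) \<inter> X)" by (rule card_ge_0_finite) (simp add: c1)
    let ?S = "{x\<in>nbhd E' v \<inter> \<Omega>'. g x \<in> X}"
    have "g ` ?S \<subseteq> cnbhd E (g v) \<inter> X" unfolding nbhd_def cnbhd_def E'_def by auto
    then have "card (g ` ?S) \<le> card (cnbhd E (g v) \<inter> X)" by (rule card_mono[OF finN])
    then have "card (g ` ?S) \<le> 1" using c1 by simp
    moreover have "inj_on g ?S" using ginj by (rule inj_on_subset) (auto simp: \<Omega>'_def)
    ultimately have cS: "card ?S \<le> 1" by (simp add: card_image)
    have "(\<Sum>x\<in>nbhd E' v \<inter> \<Omega>'. \<mu> x) = real (card ?S) / real m"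
      using sumS finO' by simp
    also have "\<dots> \<le> 1 / real m" using cS m2 by (simp add: divide_right_mono)
    finally have "\<beta> \<le> 1 / real m" using v(2) by linarith
    then have "\<beta> * real m \<le> 1" using m2 by (simp add: field_simps)
    then show ?thesis unfolding m_def[symmetric] using beta_pos by (simp add: field_simps mult.commute)
  qed
qed

end
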